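(* Let $X$ be a real Banach space and $\alpha,\beta>0$. Then: (1) for any $x\in S_X$, a sequence $(y_n)$ is a maximizing sequence in $B_X$ (respectively $S_X$) for $\alpha x$ if and only if it is a maximizing sequence in $B_X$ (respectively $S_X$) for $\beta x$; (2) $B_X$ has property $\mathsf P$ on $\alpha S_X$ if and only if $B_X$ has property $\mathsf P$ on $\beta S_X$; (3) $S_X$ has property $\mathsf P$ on $\alpha S_X$ if and only if $S_X$ has property $\mathsf P$ on $\beta S_X$; where $\mathsf P$ is any one of: remotal, uniquely remotal, strongly remotal, SUR, USUR, sup-compact.
   Context: $B_X,S_X$ are the closed unit ball and unit sphere. For non-empty bounded $F$, $x\in X$, $\delta\ge0$: $r(F,x)=\sup_{y\in F}\|x-y\|$, $Q_F(x,\delta)=\{y\in F:\|x-y\|\ge r(F,x)-\delta\}$, $Q_F(x)=Q_F(x,0)$. A maximizing sequence in $F$ for $x$ is a sequence $(y_n)$ in $F$ with $\|x-y_n\|\to r(F,x)$. On a set $A$, $F$ is: remotal if $Q_F(x)\neq\emptyset$ for each $x\in A$; uniquely remotal if $Q_F(x)$ is a singleton for each $x\in A$; strongly remotal if for every $x\in A$ and $\epsilon>0$ there is $\delta>0$ with $Q_F(x,\delta)\subseteq Q_F(x)+\epsilon B_X$; SUR if uniquely remotal and strongly remotal; USUR if uniquely remotal and for every $\epsilon>0$ there is $\delta>0$ with $Q_F(x,\delta)\subseteq Q_F(x)+\epsilon B_X$ for all $x\in A$; sup-compact if for each $x\in A$ every maximizing sequence in $F$ for $x$ has a subsequence converging to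 an element of $F$. *)

theory Defs
  imports "HOL-Analysis.Analysis"
begin

definition rad :: "'a::real_normed_vector set \<Rightarrow> 'a \<Rightarrow> real" where
  "rad F x = (SUP y\<in>F. norm (x - y))"

definition Qd :: "'a::real_normed_vector set \<Rightarrow> 'a \<Rightarrow> real \<Rightarrow> 'a set" where
  "Qd F x \<delta> = {y \<in> F. norm (x - y) \<ge> rad F x - \<delta>}"

definition Q :: "'a::real_normed_vector set \<Rightarrow> 'a \<Rightarrow> 'a set" where
  "Q F x = Qd F x 0"

definition enlarge :: "'a::real_normed_vector set \<Rightarrow> real \<Rightarrow> 'a set" where
  "enlarge S \<epsilon> = {q + e | q e. q \<in> S \<and> e \<in> (\<lambda>b. \<epsilon> *\<^sub>R b) ` cball 0 1}"

definition maximizing :: "'a::real_normed_vector set \<Rightarrow> 'a \<Rightarrow> (nat \<Rightarrow> 'a) \<Rightarrow> bool" where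
  "maximizing F x y \<longleftrightarrow> (\<forall>n. y n \<in> F) \<and> (\<lambda>n. norm (x - y n)) \<longlonglongrightarrow> rad F x"

definition remotal_on :: "'a::real_normed_vector set \<Rightarrow> 'a set \<Rightarrow> bool" where
  "remotal_on F A \<longleftrightarrow> (\<forall>x\<in>A. Q F x \<noteq> {})"

definition uniquely_remotal_on :: "'a::real_normed_vector set \<Rightarrow> 'a set \<Rightarrow> bool" where
  "uniquely_remotal_on F A \<longleftrightarrow> (\<forall>x\<in>A. \<exists>z. Q F x = {z})"

definition strongly_remotal_on :: "'a::real_normed_vector set \<Rightarrow> 'a set \<Rightarrow> bool" where
  "strongly_remotal_on F A \<longleftrightarrow>
     (\<forall>x\<in>A. \<forall>\<epsilon>>0. \<exists>\<delta>>0. Qd F x \<delta> \<subseteq> enlarge (Q F x) \<epsilon>)"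

definition SUR_on :: "'a::real_normed_vector set \<Rightarrow> 'a set \<Rightarrow> bool" where
  "SUR_on F A \<longleftrightarrow> uniquely_remotal_on F A \<and> strongly_remotal_on F A"

definition USUR_on :: "'a::real_normed_vector set \<Rightarrow> 'a set \<Rightarrow> bool" where
  "USUR_on F A \<longleftrightarrow> uniquely_remotal_on F A \<and>
     (\<forall>\<epsilon>>0. \<exists>\<delta>>0. \<forall>x\<in>A. Qd F x \<delta> \<subseteq> enlarge (Q F x) \<epsilon>)"

definition sup_compact_on :: "'a::real_normed_vector set \<Rightarrow> 'a set \<Rightarrow> bool" where
  "sup_compact_on F A \<longleftrightarrow>
     (\<forall>x\<in>A. \<forall>y. maximizing F x y \<longrightarrow>
        (\<exists>s l. strict_mono s \<and> l \<in> F \<and> (y \<circ> s) \<longlonglongrightarrow> l))"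

end

theory Submission
  imports Defs
begin

lemma rad_eq:
  fixes F :: "'a::real_normed_vector set"
  assumes F1: "F \<subseteq> cball 0 1" and F2: "\<forall>z\<in>sphere 0 1. -z \<in> F"
    and x: "x \<in> sphere 0 1" and a: "a \<ge> 0"
  shows "rad F (a *\<^sub>R x) = a + 1"
  unfolding rad_def
proof (rule cSup_eq_maximum)
  have "-x \<in> F" using F2 x by blast
  moreover have "norm (a *\<^sub>R x - - x) = a + 1"
  proof -
    have "a *\<^sub>R x - - x = (a + 1) *\<^sub>R x" by (simp add: algebra_simps)
    then show ?thesis using x a by simp
  qed
  ultimately show "a + 1 \<in> (\<lambda>y. norm (a *\<^sub>R x - y)) ` F" by force
next
  fix t assume "t \<in> (\<lambda>y. norm (a *\<^sub>R x - y)) ` F"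
  then obtain y where y: "y \<in> F" and t: "t = norm (a *\<^sub>R x - y)" by blast
  have "norm y \<le> 1" using y F1 by auto
  have "norm (a *\<^sub>R x - y) \<le> norm (a *\<^sub>R x) + norm y" by (rule norm_triangle_ineq4)
  also have "\<dots> \<le> a + 1" using x a \<open>norm y \<le> 1\<close> by simp
  finally show "t \<le> a + 1" using t by simp
qed

lemma gineq:
  fixes x y :: "'a::real_normed_vector"
  assumes a: "a > 0" and b: "b > 0" and x: "norm x = 1" and y: "norm y \<le> 1"
  shows "b + 1 - norm (b *\<^sub>R x - y) \<le> max 1 (b / a) * (a + 1 - norm (a *\<^sub>R x - y))"
proof (cases "a \<le> b")
  case True
  have eq: "a *\<^sub>R x - y = (a / b) *\<^sub>R (b *\<^sub>R x - y) - (1 - a / b) *\<^sub>R y"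
    using b by (simp add: algebra_simps)
  have "norm (a *\<^sub>R x - y) \<le> norm ((a / b) *\<^sub>R (b *\<^sub>R x - y)) + norm ((1 - a / b) *\<^sub>R y)"
    unfolding eq by (rule norm_triangle_ineq4)
  also have "\<dots> = (a / b) * norm (b *\<^sub>R x - y) + (1 - a / b) * norm y"
    using a b True by simp
  also have "\<dots> \<le> (a / b) * norm (b *\<^sub>R x - y) + (1 - a / b)"
    using a b True y by (simp add: mult_left_le)
  finally have h: "norm (a *\<^sub>R x - y) \<le> (a / b) * norm (b *\<^sub>R x - y) + (1 - a / b)" .
  have m: "max 1 (b / a) = b / a" using True a by simp
  have "(b / a) * norm (a *\<^sub>R x - y) \<le> (b / a) * ((a / b) * norm (b *\<^sub>R x - y) + (1 - a / b))"
    using mult_left_mono[OF h, of "b / a"] a b by simp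
  also have "\<dots> = norm (b *\<^sub>R x - y) + b / a - 1" using a b by (simp add: field_simps)
  finally have "(b / a) * norm (a *\<^sub>R x - y) \<le> norm (b *\<^sub>R x - y) + b / a - 1" .
  then show ?thesis unfolding m using a by (simp add: field_simps)
next
  case False
  have eq: "a *\<^sub>R x - y = (b *\<^sub>R x - y) + (a - b) *\<^sub>R x" by (simp add: algebra_simps)
  have "norm (a *\<^sub>R x - y) \<le> norm (b *\<^sub>R x - y) + norm ((a - b) *\<^sub>R x)"
    unfolding eq by (rule norm_triangle_ineq)
  also have "\<dots> = norm (b *\<^sub>R x - y) + (a - b)" using False x by simp
  finally have h: "norm (a *\<^sub>R x - y) \<le> norm (b *\<^sub>R x - y) + (a - b)" .
  have m: "max 1 (b / a) = 1" using False a by simp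
  show ?thesis unfolding m using h by simp
qed

lemma gnonneg:
  fixes x y :: "'a::real_normed_vector"
  assumes a: "a \<ge> 0" and x: "norm x = 1" and y: "norm y \<le> 1"
  shows "0 \<le> a + 1 - norm (a *\<^sub>R x - y)"
proof -
  have "norm (a *\<^sub>R x - y) \<le> norm (a *\<^sub>R x) + norm y" by (rule norm_triangle_ineq4)
  then show ?thesis using a x y by simp
qed

lemma Qd_sub:
  fixes F :: "'a::real_normed_vector set"
  assumes F1: "F \<subseteq> cball 0 1" and F2: "\<forall>z\<in>sphere 0 1. -z \<in> F"
    and x: "x \<in> sphere 0 1" and a: "a > 0" and b: "b > 0"
  shows "Qd F (a *\<^sub>R x) d \<subseteq> Qd F (b *\<^sub>R x) (max 1 (b / a) * d)"
proof
  fix y assume "y \<in> Qd F (a *\<^sub>R x) d"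
  then have y: "y \<in> F" and h: "norm (a *\<^sub>R x - y) \<ge> a + 1 - d"
    unfolding Qd_def using rad_eq[OF F1 F2 x, of a] a by auto
  have ny: "norm y \<le> 1" using y F1 by auto
  have nx: "norm x = 1" using x by simp
  have g: "b + 1 - norm (b *\<^sub>R x - y) \<le> max 1 (b / a) * (a + 1 - norm (a *\<^sub>R x - y))"
    by (rule gineq[OF a b nx ny])
  have "max 1 (b / a) * (a + 1 - norm (a *\<^sub>R x - y)) \<le> max 1 (b / a) * d"
    using h by (intro mult_left_mono) auto
  then have "norm (b *\<^sub>R x - y) \<ge> b + 1 - max 1 (b / a) * d" using g by linarith
  then show "y \<in> Qd F (b *\<^sub>R x) (max 1 (b / a) * d)"
    unfolding Qd_def using rad_eq[OF F1 F2 x, of b] b y by auto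
qed

lemma Q_eq:
  fixes F :: "'a::real_normed_vector set"
  assumes F1: "F \<subseteq> cball 0 1" and F2: "\<forall>z\<in>sphere 0 1. -z \<in> F"
    and x: "x \<in> sphere 0 1" and a: "a > 0" and b: "b > 0"
  shows "Q F (a *\<^sub>R x) = Q F (b *\<^sub>R x)"
  unfolding Q_def using Qd_sub[OF F1 F2 x a b, of 0] Qd_sub[OF F1 F2 x b a, of 0] by auto

lemma max_imp:
  fixes F :: "'a::real_normed_vector set"
  assumes F1: "F \<subseteq> cball 0 1" and F2: "\<forall>z\<in>sphere 0 1. -z \<in> F"
    and x: "x \<in> sphere 0 1" and a: "a > 0" and b: "b > 0"
    and m: "maximizing F (a *\<^sub>R x) y"
  shows "maximizing F (b *\<^sub>R x) y"
proof -
  have yF: "\<forall>n. y n \<in> F" and l: "(\<lambda>n. norm (a *\<^sub>R x - y n)) \<longlonglongrightarrow> a + 1"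
    using m rad_eq[OF F1 F2 x, of a] a unfolding maximizing_def by auto
  have nx: "norm x = 1" using x by simp
  have ny: "\<And>n. norm (y n) \<le> 1" using yF F1 by auto
  have l0: "(\<lambda>n. a + 1 - norm (a *\<^sub>R x - y n)) \<longlonglongrightarrow> (a + 1) - (a + 1)"
    by (intro tendsto_intros l)
  have l1: "(\<lambda>n. max 1 (b / a) * (a + 1 - norm (a *\<^sub>R x - y n))) \<longlonglongrightarrow> max 1 (b / a) * 0"
    using l0 by (intro tendsto_intros) simp
  have "(\<lambda>n. b + 1 - norm (b *\<^sub>R x - y n)) \<longlonglongrightarrow> 0"
  proof (rule tendsto_sandwich[of "\<lambda>n. 0" _ _ "\<lambda>n. max 1 (b / a) * (a + 1 - norm (a *\<^sub>R x - y n))"])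
    show "\<forall>\<^sub>F n in sequentially. 0 \<le> b + 1 - norm (b *\<^sub>R x - y n)"
      using gnonneg[OF _ nx ny] b by simp
    show "\<forall>\<^sub>F n in sequentially. b + 1 - norm (b *\<^sub>R x - y n) \<le> max 1 (b / a) * (a + 1 - norm (a *\<^sub>R x - y n))"
      using gineq[OF a b nx ny] by simp
  qed (use l1 in auto)
  then have "(\<lambda>n. (b + 1) - (b + 1 - norm (b *\<^sub>R x - y n))) \<longlonglongrightarrow> (b + 1) - 0"
    by (intro tendsto_intros)
  then have "(\<lambda>n. norm (b *\<^sub>R x - y n)) \<longlonglongrightarrow> b + 1" by simp
  then show ?thesis unfolding maximizing_def using yF rad_eq[OF F1 F2 x, of b] b by auto
qed

lemma max_iff:
  fixes F :: "'a::real_normed_vector set"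
  assumes F1: "F \<subseteq> cball 0 1" and F2: "\<forall>z\<in>sphere 0 1. -z \<in> F"
    and x: "x \<in> sphere 0 1" and a: "a > 0" and b: "b > 0"
  shows "maximizing F (a *\<^sub>R x) y \<longleftrightarrow> maximizing F (b *\<^sub>R x) y"
  using max_imp[OF F1 F2 x a b] max_imp[OF F1 F2 x b a] by blast

lemma props_imp:
  fixes F :: "'a::real_normed_vector set"
  assumes F1: "F \<subseteq> cball 0 1" and F2: "\<forall>z\<in>sphere 0 1. -z \<in> F"
    and a: "a > 0" and b: "b > 0"
  defines "A \<equiv> (\<lambda>x. a *\<^sub>R x) ` sphere (0::'a) 1" and "B \<equiv> (\<lambda>x. b *\<^sub>R x) ` sphere (0::'a) 1"
  shows "(remotal_on F A \<longrightarrow> remotal_on F B)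
       \<and> (uniquely_remotal_on F A \<longrightarrow> uniquely_remotal_on F B)
       \<and> (strongly_remotal_on F A \<longrightarrow> strongly_remotal_on F B)
       \<and> (USUR_on F A \<longrightarrow> USUR_on F B)
       \<and> (sup_compact_on F A \<longrightarrow> sup_compact_on F B)"
proof (intro conjI impI)
  assume h: "remotal_on F A"
  show "remotal_on F B" unfolding remotal_on_def B_def
  proof
    fix z :: 'a assume "z \<in> (\<lambda>x. b *\<^sub>R x) ` sphere 0 1"
    then obtain x where x: "x \<in> sphere 0 1" and z: "z = b *\<^sub>R x" by blast
    have "a *\<^sub>R x \<in> A" unfolding A_def using x by blast
    then show "Q F z \<noteq> {}" using h Q_eq[OF F1 F2 x a b] z unfolding remotal_on_def by auto
  qed
next
  assume h: "uniquely_remotal_on F A"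
  show "uniquely_remotal_on F B" unfolding uniquely_remotal_on_def B_def
  proof
    fix z :: 'a assume "z \<in> (\<lambda>x. b *\<^sub>R x) ` sphere 0 1"
    then obtain x where x: "x \<in> sphere 0 1" and z: "z = b *\<^sub>R x" by blast
    have "a *\<^sub>R x \<in> A" unfolding A_def using x by blast
    then show "\<exists>w. Q F z = {w}" using h Q_eq[OF F1 F2 x a b] z unfolding uniquely_remotal_on_def by metis
  qed
next
  assume h: "strongly_remotal_on F A"
  show "strongly_remotal_on F B" unfolding strongly_remotal_on_def B_def
  proof (intro ballI allI impI)
    fix z :: 'a and e assume "z \<in> (\<lambda>x. b *\<^sub>R x) ` sphere 0 1" and e: "(e::real) > 0"
    then obtain x where x: "x \<in> sphere 0 1" and z: "z = b *\<^sub>R x" by blast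
    have "a *\<^sub>R x \<in> A" unfolding A_def using x by blast
    then obtain d where d: "d > 0" and s: "Qd F (a *\<^sub>R x) d \<subseteq> enlarge (Q F (a *\<^sub>R x)) e"
      using h e unfolding strongly_remotal_on_def by blast
    define c where "c = max 1 (a / b)"
    have c: "c > 0" unfolding c_def by simp
    have "Qd F (b *\<^sub>R x) (d / c) \<subseteq> Qd F (a *\<^sub>R x) (c * (d / c))"
      using Qd_sub[OF F1 F2 x b a] unfolding c_def by blast
    also have "c * (d / c) = d" using c by simp
    finally have "Qd F z (d / c) \<subseteq> enlarge (Q F z) e"
      using s Q_eq[OF F1 F2 x a b] z by auto
    then show "\<exists>d>0. Qd F z d \<subseteq> enlarge (Q F z) e" using d c by (intro exI[of _ "d / c"]) auto
  qed
next
  assume h: "USUR_on F A"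
  have u: "uniquely_remotal_on F B" unfolding uniquely_remotal_on_def B_def
  proof
    fix z :: 'a assume "z \<in> (\<lambda>x. b *\<^sub>R x) ` sphere 0 1"
    then obtain x where x: "x \<in> sphere 0 1" and z: "z = b *\<^sub>R x" by blast
    have "a *\<^sub>R x \<in> A" unfolding A_def using x by blast
    then show "\<exists>w. Q F z = {w}" using h Q_eq[OF F1 F2 x a b] z
      unfolding USUR_on_def uniquely_remotal_on_def by metis
  qed
  have "\<forall>e>0. \<exists>d>0. \<forall>z\<in>B. Qd F z d \<subseteq> enlarge (Q F z) e"
  proof (intro allI impI)
    fix e :: real assume e: "e > 0"
    then obtain d where d: "d > 0" and s: "\<forall>z\<in>A. Qd F z d \<subseteq> enlarge (Q F z) e"
      using h unfolding USUR_on_def by blast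
    define c where "c = max 1 (a / b)"
    have c: "c > 0" unfolding c_def by simp
    have "\<forall>z\<in>B. Qd F z (d / c) \<subseteq> enlarge (Q F z) e"
    proof
      fix z :: 'a assume "z \<in> B"
      then obtain x where x: "x \<in> sphere 0 1" and z: "z = b *\<^sub>R x" unfolding B_def by blast
      have "a *\<^sub>R x \<in> A" unfolding A_def using x by blast
      have "Qd F (b *\<^sub>R x) (d / c) \<subseteq> Qd F (a *\<^sub>R x) (c * (d / c))"
        using Qd_sub[OF F1 F2 x b a] unfolding c_def by blast
      also have "c * (d / c) = d" using c by simp
      finally show "Qd F z (d / c) \<subseteq> enlarge (Q F z) e"
        using s \<open>a *\<^sub>R x \<in> A\<close> Q_eq[OF F1 F2 x a b] z by (metis subset_trans)
    qed
    then show "\<exists>d>0. \<forall>z\<in>B. Qd F z d \<subseteq> enlarge (Q F z) e" using d c by (intro exI[of _ "d / c"]) auto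
  qed
  then show "USUR_on F B" using u unfolding USUR_on_def by blast
next
  assume h: "sup_compact_on F A"
  show "sup_compact_on F B" unfolding sup_compact_on_def B_def
  proof (intro ballI allI impI)
    fix z :: 'a and y assume "z \<in> (\<lambda>x. b *\<^sub>R x) ` sphere 0 1" and m: "maximizing F z y"
    then obtain x where x: "x \<in> sphere 0 1" and z: "z = b *\<^sub>R x" by blast
    have "a *\<^sub>R x \<in> A" unfolding A_def using x by blast
    moreover have "maximizing F (a *\<^sub>R x) y" using m z max_iff[OF F1 F2 x a b] by simp
    ultimately show "\<exists>s l. strict_mono s \<and> l \<in> F \<and> (y \<circ> s) \<longlonglongrightarrow> l"
      using h unfolding sup_compact_on_def by blast
  qed
qed

lemma props_iff:
  fixes F :: "'a::real_normed_vector set"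
  assumes F1: "F \<subseteq> cball 0 1" and F2: "\<forall>z\<in>sphere 0 1. -z \<in> F"
    and a: "a > 0" and b: "b > 0"
  shows "\<forall>P \<in> {remotal_on, uniquely_remotal_on, strongly_remotal_on, SUR_on, USUR_on, sup_compact_on}.
            P F ((\<lambda>x. a *\<^sub>R x) ` sphere (0::'a) 1) \<longleftrightarrow> P F ((\<lambda>x. b *\<^sub>R x) ` sphere (0::'a) 1)"
  using props_imp[OF F1 F2 a b] props_imp[OF F1 F2 b a] unfolding SUR_on_def by auto

theorem corollary2p14:
  fixes \<alpha> \<beta> :: real
  assumes "\<alpha> > 0" and "\<beta> > 0"
  shows "(\<forall>x::'a::banach. x \<in> sphere 0 1 \<longrightarrow> (\<forall>y.
            (maximizing (cball 0 1) (\<alpha> *\<^sub>R x) y \<longleftrightarrow> maximizing (cball 0 1) (\<beta> *\<^sub>R x) y) \<and>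
            (maximizing (sphere 0 1) (\<alpha> *\<^sub>R x) y \<longleftrightarrow> maximizing (sphere 0 1) (\<beta> *\<^sub>R x) y)))
       \<and> (\<forall>P \<in> {remotal_on, uniquely_remotal_on, strongly_remotal_on, SUR_on, USUR_on, sup_compact_on}.
            (P (cball 0 1) ((\<lambda>x. \<alpha> *\<^sub>R x) ` sphere (0::'a) 1) \<longleftrightarrow>
             P (cball 0 1) ((\<lambda>x. \<beta> *\<^sub>R x) ` sphere (0::'a) 1))
          \<and> (P (sphere 0 1) ((\<lambda>x. \<alpha> *\<^sub>R x) ` sphere (0::'a) 1) \<longleftrightarrow>
             P (sphere 0 1) ((\<lambda>x. \<beta> *\<^sub>R x) ` sphere (0::'a) 1)))"
proof -
  have c1: "cball (0::'a) 1 \<subseteq> cball 0 1" by simp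
  have c2: "\<forall>z\<in>sphere (0::'a) 1. -z \<in> cball 0 1" by simp
  have s1: "sphere (0::'a) 1 \<subseteq> cball 0 1" by auto
  have s2: "\<forall>z\<in>sphere (0::'a) 1. -z \<in> sphere 0 1" by simp
  show ?thesis
    using max_iff[OF c1 c2 _ assms] max_iff[OF s1 s2 _ assms]
      props_iff[OF c1 c2 assms] props_iff[OF s1 s2 assms]
    by blast
qed

end
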